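(* Under the standing assumptions, there is a constant $C>0$ such that the following holds: if $z\in E\setminus J$, $n\ge0$, $x\in T^{-n}(z)$ and $r>0$ satisfy $|(T^n)'(x)|\ge 1/r$, then $\mathrm{dist}(x,J)\le C r$.
   Context: Standing assumptions: $T$ is a rational map of degree $d\ge2$ whose Julia set $J$ is a bounded subset of $\mathbb{C}$, $J\ne\mathbb{C}_\infty$; $E\subseteq\mathbb{C}$ is non-empty and compact; $U\subseteq\mathbb{C}$ is a simply connected open set with $E\subseteq U$, $U\cap P(T)=\emptyset$, $U\cap J\ne\emptyset$, where $P(T)=\overline{\bigcup_{n\ge1}T^n(\mathrm{Crit}(T))}$ is the post-critical set; the orbital set $\bigcup_{k\ge0}T^{-k}(E)$ is bounded in $\mathbb{C}$. $\mathrm{dist}(x,J)=\inf\{|x-y|:y\in J\}$. *)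

theory Defs
  imports "HOL-Analysis.Analysis" "HOL-Computational_Algebra.Polynomial_Factorial"
begin

text \<open>The Riemann sphere is modelled as complex option, None being the point at infinity,
  equipped with the chordal metric.\<close>

definition chordal :: "complex option \<Rightarrow> complex option \<Rightarrow> real" where
  "chordal a b = (case a of
      None \<Rightarrow> (case b of None \<Rightarrow> 0 | Some w \<Rightarrow> 2 / sqrt (1 + (cmod w)\<^sup>2))
    | Some z \<Rightarrow> (case b of None \<Rightarrow> 2 / sqrt (1 + (cmod z)\<^sup>2)
                | Some w \<Rightarrow> 2 * cmod (z - w) / sqrt ((1 + (cmod z)\<^sup>2) * (1 + (cmod w)\<^sup>2))))"

definition sph_ball :: "complex option \<Rightarrow> real \<Rightarrow> complex option set" where
  "sph_ball a e = {b. chordal a b < e}"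

definition sph_open :: "complex option set \<Rightarrow> bool" where
  "sph_open V \<longleftrightarrow> (\<forall>a\<in>V. \<exists>e>0. sph_ball a e \<subseteq> V)"

definition sph_closure :: "complex option set \<Rightarrow> complex option set" where
  "sph_closure S = {a. \<forall>e>0. \<exists>s\<in>S. chordal a s < e}"

definition rat_map :: "complex poly \<Rightarrow> complex poly \<Rightarrow> complex option \<Rightarrow> complex option" where
  "rat_map p q a = (case a of
      None \<Rightarrow> (if degree q < degree p then None
               else if degree p = degree q then Some (lead_coeff p / lead_coeff q)
               else Some 0)
    | Some z \<Rightarrow> (if poly q z = 0 then None else Some (poly p z / poly q z)))"

definition rat_degree :: "complex poly \<Rightarrow> complex poly \<Rightarrow> nat" where
  "rat_degree p q = max (degree p) (degree q)"

definition iter_normal_on :: "complex poly \<Rightarrow> complex poly \<Rightarrow> complex option set \<Rightarrow> bool" where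
  "iter_normal_on p q V \<longleftrightarrow>
     (\<forall>ns :: nat \<Rightarrow> nat. \<exists>(s :: nat \<Rightarrow> nat) (g :: complex option \<Rightarrow> complex option). strict_mono s \<and>
        (\<forall>a\<in>V. \<exists>e>0. \<forall>eps>0. \<exists>N. \<forall>k\<ge>N. \<forall>b\<in>V \<inter> sph_ball a e.
            chordal ((rat_map p q ^^ ns (s k)) b) (g b) < eps))"

definition fatou_set :: "complex poly \<Rightarrow> complex poly \<Rightarrow> complex option set" where
  "fatou_set p q = {a. \<exists>V. sph_open V \<and> a \<in> V \<and> iter_normal_on p q V}"

definition julia_set :: "complex poly \<Rightarrow> complex poly \<Rightarrow> complex option set" where
  "julia_set p q = UNIV - fatou_set p q"

definition crit_points :: "complex poly \<Rightarrow> complex poly \<Rightarrow> complex option set" where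
  "crit_points p q = {c. \<forall>e>0. \<not> inj_on (rat_map p q) (sph_ball c e)}"

definition postcrit :: "complex poly \<Rightarrow> complex poly \<Rightarrow> complex option set" where
  "postcrit p q = sph_closure (\<Union>n\<in>{1..}. (rat_map p q ^^ n) ` crit_points p q)"

end

theory Submission
  imports Defs "HOL-Complex_Analysis.Complex_Analysis" "HOL-Computational_Algebra.Fundamental_Theorem_Algebra"
begin

definition ichart :: "complex \<Rightarrow> complex option" where
  "ichart v = (if v = 0 then None else Some (1 / v))"

definition ch :: "bool \<Rightarrow> complex \<Rightarrow> complex option" where
  "ch b = (if b then Some else ichart)"

lemma chordal_self [simp]: "chordal a a = 0"
  by (cases a) (simp_all add: chordal_def)

lemma div_le_self_aux: "(0::real) \<le> x \<Longrightarrow> 1 \<le> s \<Longrightarrow> x / s \<le> x"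
proof -
  assume "0 \<le> x" "1 \<le> s"
  then have "x / s \<le> x / 1" by (intro divide_left_mono) auto
  then show ?thesis by simp
qed

lemma chordal_Some_le: "chordal (Some u) (Some v) \<le> 2 * cmod (u - v)"
proof -
  have a: "1 \<le> 1 + (cmod u)\<^sup>2" and b: "1 \<le> 1 + (cmod v)\<^sup>2" by simp_all
  have "1 * 1 \<le> (1 + (cmod u)\<^sup>2) * (1 + (cmod v)\<^sup>2)"
    using a b by (intro mult_mono) auto
  then have s: "1 \<le> sqrt ((1 + (cmod u)\<^sup>2) * (1 + (cmod v)\<^sup>2))" by simp
  have "2 * cmod (u - v) / sqrt ((1 + (cmod u)\<^sup>2) * (1 + (cmod v)\<^sup>2)) \<le> 2 * cmod (u - v)"
    using s by (intro div_le_self_aux) auto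
  then show ?thesis by (simp add: chordal_def)
qed

lemma sqrt_inv_aux:
  fixes A :: real assumes "A > 0"
  shows "sqrt (1 + (1 / A)\<^sup>2) = sqrt (1 + A\<^sup>2) / A"
proof -
  have "1 + (1/A)\<^sup>2 = (1 + A\<^sup>2) / A\<^sup>2" using assms by (simp add: field_simps power2_eq_square)
  then show ?thesis using assms by (simp add: real_sqrt_divide)
qed

lemma chordal_ichart: "chordal (ichart u) (ichart v) = chordal (Some u) (Some v)"
proof (cases "u = 0")
  case True
  show ?thesis
  proof (cases "v = 0")
    case True with \<open>u = 0\<close> show ?thesis by (simp add: chordal_def ichart_def)
  next
    case False
    have "chordal (ichart u) (ichart v) = 2 / sqrt (1 + (1 / cmod v)\<^sup>2)"
      using True False by (simp add: chordal_def ichart_def norm_divide)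
    also have "\<dots> = 2 * cmod v / sqrt (1 + (cmod v)\<^sup>2)"
      using False by (simp add: sqrt_inv_aux)
    finally show ?thesis using True by (simp add: chordal_def)
  qed
next
  case False
  show ?thesis
  proof (cases "v = 0")
    case True
    have "chordal (ichart u) (ichart v) = 2 / sqrt (1 + (1 / cmod u)\<^sup>2)"
      using True False by (simp add: chordal_def ichart_def norm_divide)
    also have "\<dots> = 2 * cmod u / sqrt (1 + (cmod u)\<^sup>2)"
      using False by (simp add: sqrt_inv_aux)
    finally show ?thesis using True by (simp add: chordal_def)
  next
    case F2: False
    let ?A = "cmod u" and ?B = "cmod v"
    have A: "?A > 0" and B: "?B > 0" using False F2 by auto
    have "cmod (1/u - 1/v) = cmod (v - u) / (?A * ?B)"
      using False F2 by (simp add: field_simps norm_divide norm_mult)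
    moreover have "sqrt ((1 + (1/?A)\<^sup>2) * (1 + (1/?B)\<^sup>2)) = sqrt ((1 + ?A\<^sup>2) * (1 + ?B\<^sup>2)) / (?A * ?B)"
      using A B by (simp add: real_sqrt_mult sqrt_inv_aux)
    ultimately have "chordal (ichart u) (ichart v) = 2 * (cmod (v - u) / (?A * ?B)) / (sqrt ((1 + ?A\<^sup>2) * (1 + ?B\<^sup>2)) / (?A * ?B))"
      using False F2 by (simp add: chordal_def ichart_def norm_divide)
    also have "\<dots> = 2 * cmod (u - v) / sqrt ((1 + ?A\<^sup>2) * (1 + ?B\<^sup>2))"
      using A B by (simp add: field_simps norm_minus_commute)
    finally show ?thesis by (simp add: chordal_def)
  qed
qed

lemma chordal_ch: "chordal (ch b u) (ch b v) = chordal (Some u) (Some v)"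
  by (simp add: ch_def chordal_ichart)

lemma chordal_ch_le: "chordal (ch b u) (ch b v) \<le> 2 * cmod (u - v)"
  by (simp add: chordal_ch chordal_Some_le)

lemma chordal_Some_near:
  assumes "\<eta> > 0"
  shows "\<exists>\<epsilon>>0. \<forall>b'. chordal (Some w) b' < \<epsilon> \<longrightarrow> (\<exists>w'. b' = Some w' \<and> cmod (w' - w) < \<eta>)"
proof -
  define s where "s = sqrt (1 + (cmod w)\<^sup>2)"
  have s1: "s \<ge> 1" unfolding s_def by simp
  define \<epsilon> where "\<epsilon> = min (2 / s) (2 * \<eta> / (s * (1 + cmod w + \<eta>)))"
  have "\<epsilon> > 0" using s1 assms unfolding \<epsilon>_def by (simp add: add_pos_nonneg)
  moreover have "\<exists>w'. b' = Some w' \<and> cmod (w' - w) < \<eta>" if "chordal (Some w) b' < \<epsilon>" for b'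
  proof (cases b')
    case None
    then have "chordal (Some w) b' = 2 / s" by (simp add: chordal_def s_def)
    then show ?thesis using that unfolding \<epsilon>_def by simp
  next
    case (Some w')
    show ?thesis
    proof (rule ccontr)
      assume "\<not> ?thesis"
      then have t: "cmod (w' - w) \<ge> \<eta>" using Some by auto
      define t where "t = cmod (w' - w)"
      define s' where "s' = sqrt (1 + (cmod w')\<^sup>2)"
      have "s' \<le> sqrt ((1 + cmod w') ^ 2)" unfolding s'_def
        by (intro real_sqrt_le_mono) (simp add: power2_eq_square algebra_simps)
      then have "s' \<le> 1 + cmod w'" by simp
      also have "cmod w' \<le> cmod w + t" unfolding t_def
        by (metis add.commute diff_add_cancel norm_triangle_ineq)
      finally have s'le: "s' \<le> 1 + cmod w + t" by simp
      have s'pos: "s' > 0" unfolding s'_def by (simp add: add_pos_nonneg)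
      have ch: "chordal (Some w) b' = 2 * t / (s * s')"
        using Some by (simp add: chordal_def s_def s'_def t_def real_sqrt_mult norm_minus_commute)
      have "2 * \<eta> / (s * (1 + cmod w + \<eta>)) \<le> 2 * t / (s * (1 + cmod w + t))"
      proof -
        have "\<eta> * (1 + cmod w) \<le> t * (1 + cmod w)"
          using t unfolding t_def by (intro mult_right_mono) auto
        then have "\<eta> * (1 + cmod w + t) \<le> t * (1 + cmod w + \<eta>)"
          by (simp add: algebra_simps)
        then have h2: "2 * s * (\<eta> * (1 + cmod w + t)) \<le> 2 * s * (t * (1 + cmod w + \<eta>))"
          using s1 by (intro mult_left_mono) auto
        have "0 < s * (1 + cmod w + \<eta>)" "0 < s * (1 + cmod w + t)"
          using s1 assms t unfolding t_def by (auto intro!: mult_pos_pos add_pos_nonneg)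
        then show ?thesis using h2 unfolding t_def
          by (simp add: divide_simps algebra_simps)
      qed
      also have "\<dots> \<le> 2 * t / (s * s')"
        using s1 s'pos s'le t assms unfolding t_def
        by (intro divide_left_mono mult_left_mono mult_pos_pos) auto
      finally have "\<epsilon> \<le> chordal (Some w) b'" using ch unfolding \<epsilon>_def by simp
      then show False using that by simp
    qed
  qed
  ultimately show ?thesis by blast
qed

lemma poly_holo [holomorphic_intros]: "(\<lambda>z. poly p z) holomorphic_on S"
  unfolding holomorphic_on_def field_differentiable_def
  using poly_DERIV by (blast intro: has_field_derivative_at_within)

lemma poly_isCont: "isCont (\<lambda>z. poly p (z::complex)) w"
  by (rule DERIV_isCont[OF poly_DERIV])

lemma nz_nbhd:
  assumes "isCont f w" "f w \<noteq> (0::complex)"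
  shows "\<exists>\<epsilon>>0. \<forall>u\<in>ball w \<epsilon>. f u \<noteq> 0"
proof -
  obtain d where "d > 0" "f ` ball w d \<subseteq> ball (f w) (cmod (f w))"
    using assms continuous_at_ball[of w f] by (meson zero_less_norm_iff)
  then show ?thesis
    by (intro exI[of _ d]) (auto simp: dist_norm subset_iff)
qed

lemma hol_comp_nbhd:
  assumes "\<phi> holomorphic_on ball z0 \<rho>" "\<rho> > 0" "\<psi> holomorphic_on ball (\<phi> z0) \<epsilon>" "\<epsilon> > 0"
  shows "\<exists>\<rho>'>0. \<rho>' \<le> \<rho> \<and> (\<forall>z\<in>ball z0 \<rho>'. \<phi> z \<in> ball (\<phi> z0) \<epsilon>) \<and>
           (\<psi> \<circ> \<phi>) holomorphic_on ball z0 \<rho>'"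
proof -
  have "isCont \<phi> z0"
    using assms(1,2) holomorphic_on_imp_continuous_on continuous_on_eq_continuous_at
    by (metis centre_in_ball open_ball)
  then obtain d where d: "d > 0" "\<phi> ` ball z0 d \<subseteq> ball (\<phi> z0) \<epsilon>"
    using continuous_at_ball assms(4) by blast
  define \<rho>' where "\<rho>' = min d \<rho>"
  have sub: "ball z0 \<rho>' \<subseteq> ball z0 \<rho>" "ball z0 \<rho>' \<subseteq> ball z0 d" unfolding \<rho>'_def by auto
  have "(\<psi> \<circ> \<phi>) holomorphic_on ball z0 \<rho>'"
    using sub d by (intro holomorphic_on_compose_gen[OF holomorphic_on_subset[OF assms(1)] assms(3)]) auto
  then show ?thesis using sub d assms(2) unfolding \<rho>'_def
    by (intro exI[of _ "min d \<rho>"]) (auto simp: image_subset_iff)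
qed

lemma fa1: "(a::complex) \<noteq> 0 \<Longrightarrow> b \<noteq> 0 \<Longrightarrow> rq \<noteq> 0 \<Longrightarrow> (rp / b) / (rq / (a * b)) = a * rp / rq"
  by (simp add: field_simps)

lemma fa2: "(a::complex) \<noteq> 0 \<Longrightarrow> b \<noteq> 0 \<Longrightarrow> rq \<noteq> 0 \<Longrightarrow> rp \<noteq> 0 \<Longrightarrow> (rp / (a * b)) / (rq / b) = 1 / (a * rq / rp)"
  by (simp add: field_simps)

locale rm =
  fixes p q :: "complex poly"
  assumes cop: "coprime p q" and deg2: "rat_degree p q \<ge> 2"
begin

abbreviation T where "T \<equiv> rat_map p q"

lemma q_nz: "q \<noteq> 0"
proof
  assume "q = 0"
  then have "is_unit p" using cop by simp
  then have "p \<noteq> 0" by auto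
  then have "degree p = 0" using is_unit_iff_degree \<open>is_unit p\<close> by auto
  then show False using deg2 \<open>q = 0\<close> by (simp add: rat_degree_def)
qed

lemma p_nz: "p \<noteq> 0"
proof
  assume "p = 0"
  then have "is_unit q" using cop by simp
  then have "degree q = 0" using is_unit_iff_degree q_nz by auto
  then show False using deg2 \<open>p = 0\<close> by (simp add: rat_degree_def)
qed

lemma no_common_root: "poly q c = 0 \<Longrightarrow> poly p c \<noteq> 0"
proof
  assume "poly q c = 0" "poly p c = 0"
  then have "[:-c,1:] dvd p" "[:-c,1:] dvd q" by (simp_all add: poly_eq_0_iff_dvd)
  then have "is_unit [:-c,1:]" using cop coprime_common_divisor by blast
  then show False using is_unit_iff_degree[of "[:-c,1:]"] by simp
qed

lemma T_Some: "T (Some u) = (if poly q u = 0 then None else Some (poly p u / poly q u))"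
  by (simp add: rat_map_def)

lemma LR_fin:
  "\<exists>\<epsilon>>0. \<exists>\<psi> b'. \<psi> holomorphic_on ball u0 \<epsilon> \<and> (\<forall>u\<in>ball u0 \<epsilon>. T (Some u) = ch b' (\<psi> u))"
proof (cases "poly q u0 = 0")
  case False
  obtain \<epsilon> where e: "\<epsilon> > 0" "\<forall>u\<in>ball u0 \<epsilon>. poly q u \<noteq> 0"
    using nz_nbhd[OF poly_isCont False] by blast
  have "(\<lambda>u. poly p u / poly q u) holomorphic_on ball u0 \<epsilon>"
    using e by (intro holomorphic_intros) auto
  moreover have "\<forall>u\<in>ball u0 \<epsilon>. T (Some u) = ch True (poly p u / poly q u)"
    using e by (simp add: T_Some ch_def)
  ultimately show ?thesis using e by blast
next
  case True
  then have "poly p u0 \<noteq> 0" by (rule no_common_root)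
  then obtain \<epsilon> where e: "\<epsilon> > 0" "\<forall>u\<in>ball u0 \<epsilon>. poly p u \<noteq> 0"
    using nz_nbhd[OF poly_isCont] by blast
  have "(\<lambda>u. poly q u / poly p u) holomorphic_on ball u0 \<epsilon>"
    using e by (intro holomorphic_intros) auto
  moreover have "\<forall>u\<in>ball u0 \<epsilon>. T (Some u) = ch False (poly q u / poly p u)"
    using e by (simp add: T_Some ch_def ichart_def)
  ultimately show ?thesis using e by blast
qed

lemma LR_inf:
  "\<exists>\<epsilon>>0. \<exists>\<psi> b'. \<psi> holomorphic_on ball 0 \<epsilon> \<and> (\<forall>u\<in>ball 0 \<epsilon>. T (ichart u) = ch b' (\<psi> u))"
proof -
  define rp where "rp = reflect_poly p"
  define rq where "rq = reflect_poly q"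
  define dp where "dp = degree p"
  define dq where "dq = degree q"
  have rp0: "poly rp 0 \<noteq> 0" using p_nz by (simp add: rp_def poly_0_coeff_0)
  have rq0: "poly rq 0 \<noteq> 0" using q_nz by (simp add: rq_def poly_0_coeff_0)
  obtain e1 where e1: "e1 > 0" "\<forall>u\<in>ball 0 e1. poly rp u \<noteq> 0"
    using nz_nbhd[OF poly_isCont rp0] by blast
  obtain e2 where e2: "e2 > 0" "\<forall>u\<in>ball 0 e2. poly rq u \<noteq> 0"
    using nz_nbhd[OF poly_isCont rq0] by blast
  define \<epsilon> where "\<epsilon> = min e1 e2"
  have e: "\<epsilon> > 0" "\<And>u. u \<in> ball 0 \<epsilon> \<Longrightarrow> poly rp u \<noteq> 0 \<and> poly rq u \<noteq> 0"
    using e1 e2 unfolding \<epsilon>_def by auto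
  have pinv: "poly p (1/u) = poly rp u / u ^ dp" if "u \<noteq> 0" for u
    using that poly_reflect_poly_nz[of u p] by (simp add: rp_def dp_def field_simps)
  have qinv: "poly q (1/u) = poly rq u / u ^ dq" if "u \<noteq> 0" for u
    using that poly_reflect_poly_nz[of u q] by (simp add: rq_def dq_def field_simps)
  show ?thesis
  proof (cases "dp \<le> dq")
    case True
    define \<psi> where "\<psi> u = u ^ (dq - dp) * poly rp u / poly rq u" for u
    have "\<psi> holomorphic_on ball 0 \<epsilon>" unfolding \<psi>_def using e by (intro holomorphic_intros) auto
    moreover have "T (ichart u) = ch True (\<psi> u)" if "u \<in> ball 0 \<epsilon>" for u
    proof (cases "u = 0")
      case True
      have "T None = Some (\<psi> 0)"
      proof (cases "dp = dq")
        case True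
        then show ?thesis by (simp add: \<psi>_def rat_map_def rp_def rq_def poly_0_coeff_0 dp_def dq_def)
      next
        case False
        then have "dp < dq" "0 < dq - dp" using \<open>dp \<le> dq\<close> by auto
        then show ?thesis by (simp add: \<psi>_def rat_map_def dp_def dq_def)
      qed
      then show ?thesis using True by (simp add: ichart_def ch_def)
    next
      case False
      have nz: "poly rp u \<noteq> 0" "poly rq u \<noteq> 0" using e that by auto
      have eq: "u ^ dq = u ^ (dq - dp) * u ^ dp" using \<open>dp \<le> dq\<close> by (simp flip: power_add)
      have "poly p (1/u) / poly q (1/u) = (poly rp u / u^dp) / (poly rq u / (u^(dq-dp) * u^dp))"
        by (simp only: pinv[OF False] qinv[OF False] eq)
      also have "\<dots> = \<psi> u" unfolding \<psi>_def by (rule fa1) (use False nz in auto)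
      finally have "poly p (1/u) / poly q (1/u) = \<psi> u" .
      moreover have "poly q (1/u) \<noteq> 0" using qinv[OF False] nz False by simp
      ultimately show ?thesis using False by (simp add: ichart_def ch_def T_Some)
    qed
    ultimately show ?thesis using e by blast
  next
    case False
    define \<psi> where "\<psi> u = u ^ (dp - dq) * poly rq u / poly rp u" for u
    have "\<psi> holomorphic_on ball 0 \<epsilon>" unfolding \<psi>_def using e by (intro holomorphic_intros) auto
    moreover have "T (ichart u) = ch False (\<psi> u)" if "u \<in> ball 0 \<epsilon>" for u
    proof (cases "u = 0")
      case True
      have "0 < dp - dq" using \<open>\<not> dp \<le> dq\<close> by auto
      then have "\<psi> 0 = 0" by (simp add: \<psi>_def)
      moreover have "T None = None" using \<open>\<not> dp \<le> dq\<close> by (simp add: rat_map_def dp_def dq_def)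
      ultimately show ?thesis using True by (simp add: ichart_def ch_def)
    next
      case F: False
      have nz: "poly rp u \<noteq> 0" "poly rq u \<noteq> 0" using e that by auto
      have eq: "u ^ dp = u ^ (dp - dq) * u ^ dq" using \<open>\<not> dp \<le> dq\<close> by (simp flip: power_add)
      have "poly p (1/u) / poly q (1/u) = (poly rp u / (u^(dp-dq) * u^dq)) / (poly rq u / u^dq)"
        by (simp only: pinv[OF F] qinv[OF F] eq)
      also have "\<dots> = 1 / \<psi> u" unfolding \<psi>_def by (rule fa2) (use F nz in auto)
      finally have "poly p (1/u) / poly q (1/u) = 1 / \<psi> u" .
      moreover have "poly q (1/u) \<noteq> 0" using qinv[OF F] nz F by simp
      moreover have "\<psi> u \<noteq> 0" using F nz unfolding \<psi>_def by simp
      ultimately show ?thesis using F by (simp add: ichart_def ch_def T_Some)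
    qed
    ultimately show ?thesis using e by blast
  qed
qed

lemma LR:
  "\<exists>\<epsilon>>0. \<exists>\<psi> b'. \<psi> holomorphic_on ball u0 \<epsilon> \<and> (\<forall>u\<in>ball u0 \<epsilon>. T (ch b u) = ch b' (\<psi> u))"
proof (cases b)
  case True
  then show ?thesis using LR_fin by (simp add: ch_def)
next
  case False
  show ?thesis
  proof (cases "u0 = 0")
    case True
    then show ?thesis using LR_inf False by (simp add: ch_def)
  next
    case u0: False
    obtain \<epsilon>1 \<psi>1 b' where e1: "\<epsilon>1 > 0" "\<psi>1 holomorphic_on ball (1/u0) \<epsilon>1"
      "\<forall>u\<in>ball (1/u0) \<epsilon>1. T (Some u) = ch b' (\<psi>1 u)"
      using LR_fin[of "1/u0"] by blast
    have hinv: "(\<lambda>u. 1/u) holomorphic_on ball u0 (cmod u0)"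
      by (intro holomorphic_intros) (auto simp: dist_norm)
    obtain \<rho> where r: "\<rho> > 0" "\<rho> \<le> cmod u0" "\<forall>z\<in>ball u0 \<rho>. 1/z \<in> ball (1/u0) \<epsilon>1"
      "(\<psi>1 \<circ> (\<lambda>u. 1/u)) holomorphic_on ball u0 \<rho>"
      using hol_comp_nbhd[OF hinv _ _ e1(1)] e1(2) u0 by auto
    have "T (ch b u) = ch b' ((\<psi>1 \<circ> (\<lambda>u. 1/u)) u)" if "u \<in> ball u0 \<rho>" for u
    proof -
      have "u \<noteq> 0" using that r(2) by (auto simp: dist_norm)
      then show ?thesis using False e1(3) r(3) that by (simp add: ch_def ichart_def)
    qed
    then show ?thesis using r by blast
  qed
qed

end

definition mrep :: "(complex \<Rightarrow> complex option) \<Rightarrow> complex \<Rightarrow> bool" where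
  "mrep F z0 \<longleftrightarrow> (\<exists>\<rho>>0. \<exists>\<phi> b. \<phi> holomorphic_on ball z0 \<rho> \<and> (\<forall>z\<in>ball z0 \<rho>. F z = ch b (\<phi> z)))"

lemma ch_inj: "ch b u = ch b v \<Longrightarrow> u = v"
  by (cases b) (auto simp: ch_def ichart_def split: if_splits)

lemma mrep_Some_affine: "mrep (\<lambda>z. Some (x + d * z)) z0"
proof -
  have "(\<lambda>z. x + d * z) holomorphic_on ball z0 1" by (intro holomorphic_intros)
  moreover have "\<forall>z\<in>ball z0 1. Some (x + d * z) = ch True (x + d * z)" by (simp add: ch_def)
  ultimately have "\<exists>\<phi> b. \<phi> holomorphic_on ball z0 1 \<and> (\<forall>z\<in>ball z0 1. Some (x + d * z) = ch b (\<phi> z))"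
    by blast
  then show ?thesis unfolding mrep_def by (intro exI[of _ "1::real"]) auto
qed

definition Mo :: "complex \<Rightarrow> complex \<Rightarrow> complex \<Rightarrow> complex option \<Rightarrow> complex" where
  "Mo a b c v = (case v of None \<Rightarrow> (b - c) / (b - a) | Some w \<Rightarrow> (b - c) / (b - a) * ((w - a) / (w - c)))"

lemma Mo_hol:
  assumes "mrep F z0" "\<And>z. F z \<noteq> Some c"
  shows "(\<lambda>z. Mo a b c (F z)) field_differentiable at z0"
proof -
  obtain \<rho> \<phi> bb where r: "\<rho> > 0" "\<phi> holomorphic_on ball z0 \<rho>" "\<forall>z\<in>ball z0 \<rho>. F z = ch bb (\<phi> z)"
    using assms(1) unfolding mrep_def by blast
  define k where "k = (b - c) / (b - a)"
  have "(\<lambda>z. Mo a b c (F z)) holomorphic_on ball z0 \<rho>"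
  proof (cases bb)
    case True
    have ne: "\<phi> z \<noteq> c" if "z \<in> ball z0 \<rho>" for z
      using r(3) that assms(2)[of z] True by (auto simp: ch_def)
    have "(\<lambda>z. k * ((\<phi> z - a) / (\<phi> z - c))) holomorphic_on ball z0 \<rho>"
      using ne r(2) by (intro holomorphic_intros) auto
    then show ?thesis
      by (rule holomorphic_transform) (use r(3) True in \<open>simp add: ch_def Mo_def k_def\<close>)
  next
    case False
    have ne: "1 - c * \<phi> z \<noteq> 0" if "z \<in> ball z0 \<rho>" for z
    proof
      assume h: "1 - c * \<phi> z = 0"
      then have "\<phi> z \<noteq> 0" by auto
      moreover have "c = 1 / \<phi> z" using h \<open>\<phi> z \<noteq> 0\<close> by (simp add: field_simps)
      ultimately have "F z = Some c" using r(3) that False by (simp add: ch_def ichart_def)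
      then show False using assms(2) by blast
    qed
    have "(\<lambda>z. k * ((1 - a * \<phi> z) / (1 - c * \<phi> z))) holomorphic_on ball z0 \<rho>"
      using ne r(2) by (intro holomorphic_intros) auto
    then show ?thesis
    proof (rule holomorphic_transform)
      fix z assume z: "z \<in> ball z0 \<rho>"
      show "k * ((1 - a * \<phi> z) / (1 - c * \<phi> z)) = Mo a b c (F z)"
      proof (cases "\<phi> z = 0")
        case True
        then show ?thesis using r(3) z False by (simp add: ch_def ichart_def Mo_def k_def)
      next
        case nz: False
        have "(1/\<phi> z - a) / (1/\<phi> z - c) = (1 - a * \<phi> z) / (1 - c * \<phi> z)"
          using nz ne[OF z] by (simp add: field_simps)
        then show ?thesis using r(3) z False nz by (simp add: ch_def ichart_def Mo_def k_def)
      qed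
    qed
  qed
  then show ?thesis using r(1) by (intro holomorphic_on_imp_differentiable_at) auto
qed

context rm
begin

lemma mrep_T:
  assumes "mrep F z0" shows "mrep (T \<circ> F) z0"
proof -
  obtain \<rho> \<phi> b where r: "\<rho> > 0" "\<phi> holomorphic_on ball z0 \<rho>" "\<forall>z\<in>ball z0 \<rho>. F z = ch b (\<phi> z)"
    using assms unfolding mrep_def by blast
  obtain \<epsilon> \<psi> b' where e: "\<epsilon> > 0" "\<psi> holomorphic_on ball (\<phi> z0) \<epsilon>"
    "\<forall>u\<in>ball (\<phi> z0) \<epsilon>. T (ch b u) = ch b' (\<psi> u)"
    using LR by blast
  obtain \<rho>' where r': "\<rho>' > 0" "\<rho>' \<le> \<rho>" "\<forall>z\<in>ball z0 \<rho>'. \<phi> z \<in> ball (\<phi> z0) \<epsilon>"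
    "(\<psi> \<circ> \<phi>) holomorphic_on ball z0 \<rho>'"
    using hol_comp_nbhd[OF r(2) r(1) e(2) e(1)] by blast
  have "\<forall>z\<in>ball z0 \<rho>'. (T \<circ> F) z = ch b' ((\<psi> \<circ> \<phi>) z)"
    using r(3) r'(2,3) e(3) by auto
  then show ?thesis unfolding mrep_def using r'(1,4) by blast
qed

lemma mrep_iter: "mrep F z0 \<Longrightarrow> mrep ((T ^^ n) \<circ> F) z0"
proof (induction n)
  case 0 then show ?case by simp
next
  case (Suc n)
  have "mrep (T \<circ> ((T ^^ n) \<circ> F)) z0" using Suc.IH[OF Suc.prems] by (rule mrep_T)
  then show ?case by (simp only: funpow.simps o_assoc)
qed

definition fr :: "complex \<Rightarrow> complex" where "fr w = poly p w / poly q w"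

lemma iter_fin:
  assumes "\<forall>j\<le>n. (T ^^ j) (Some x) \<noteq> None"
  shows "\<exists>\<rho>>0. (fr ^^ n) holomorphic_on ball x \<rho> \<and> (\<forall>y\<in>ball x \<rho>. (T ^^ n) (Some y) = Some ((fr ^^ n) y))"
  using assms
proof (induction n)
  case 0
  then show ?case by (intro exI[of _ 1]) (auto intro: holomorphic_intros)
next
  case (Suc n)
  then obtain \<rho> where r: "\<rho> > 0" "(fr ^^ n) holomorphic_on ball x \<rho>"
    "\<forall>y\<in>ball x \<rho>. (T ^^ n) (Some y) = Some ((fr ^^ n) y)" by auto
  define w where "w = (fr ^^ n) x"
  have "(T ^^ n) (Some x) = Some w" using r(1,3) unfolding w_def by auto
  moreover have "(T ^^ Suc n) (Some x) \<noteq> None" using Suc.prems by blast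
  ultimately have "T (Some w) \<noteq> None" by simp
  then have qw: "poly q w \<noteq> 0" by (simp add: T_Some split: if_splits)
  obtain \<epsilon> where e: "\<epsilon> > 0" "\<forall>u\<in>ball w \<epsilon>. poly q u \<noteq> 0"
    using nz_nbhd[OF poly_isCont qw] by blast
  have hf: "fr holomorphic_on ball w \<epsilon>" unfolding fr_def using e by (intro holomorphic_intros) auto
  obtain \<rho>' where r': "\<rho>' > 0" "\<rho>' \<le> \<rho>" "\<forall>z\<in>ball x \<rho>'. (fr ^^ n) z \<in> ball w \<epsilon>"
    "(fr \<circ> (fr ^^ n)) holomorphic_on ball x \<rho>'"
    using hol_comp_nbhd[OF r(2) r(1), of fr \<epsilon>] hf e(1) unfolding w_def by blast
  have "(T ^^ Suc n) (Some y) = Some ((fr ^^ Suc n) y)" if "y \<in> ball x \<rho>'" for y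
  proof -
    have y: "y \<in> ball x \<rho>" using that r'(2) by auto
    have "poly q ((fr ^^ n) y) \<noteq> 0" using e(2) r'(3) that by blast
    then show ?thesis using r(3) y by (simp add: T_Some fr_def)
  qed
  moreover have "(fr ^^ Suc n) holomorphic_on ball x \<rho>'" using r'(4) by (simp only: funpow.simps)
  ultimately show ?case using r'(1) by blast
qed

lemma to_Some:
  assumes "\<psi> holomorphic_on ball u0 \<epsilon>" "\<epsilon> > 0" "ch b (\<psi> u0) \<noteq> None"
  shows "\<exists>\<epsilon>'>0. \<epsilon>' \<le> \<epsilon> \<and> (\<exists>\<psi>'. \<psi>' holomorphic_on ball u0 \<epsilon>' \<and> (\<forall>u\<in>ball u0 \<epsilon>'. ch b (\<psi> u) = Some (\<psi>' u)))"
proof (cases b)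
  case True
  then show ?thesis using assms by (auto simp: ch_def)
next
  case False
  then have nz: "\<psi> u0 \<noteq> 0" using assms(3) by (auto simp: ch_def ichart_def)
  have "isCont \<psi> u0"
    using assms(1,2) holomorphic_on_imp_continuous_on continuous_on_eq_continuous_at
    by (metis centre_in_ball open_ball)
  then obtain e where e: "e > 0" "\<forall>u\<in>ball u0 e. \<psi> u \<noteq> 0" using nz_nbhd nz by blast
  define e' where "e' = min e \<epsilon>"
  have "(\<lambda>u. 1 / \<psi> u) holomorphic_on ball u0 e'"
    using e assms(1) unfolding e'_def by (intro holomorphic_intros) (auto intro: holomorphic_on_subset)
  moreover have "\<forall>u\<in>ball u0 e'. ch b (\<psi> u) = Some (1 / \<psi> u)"
    using e False unfolding e'_def by (auto simp: ch_def ichart_def)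
  ultimately show ?thesis using e assms(2) unfolding e'_def by (intro exI[of _ "min e \<epsilon>"]) auto
qed

end

context rm begin

lemma fatou_forward:
  assumes y: "y \<in> fatou_set p q" and nc: "y \<notin> crit_points p q" and Ty: "T y \<noteq> None"
  shows "T y \<in> fatou_set p q"
proof -
  obtain e1 where e1: "e1 > 0" "inj_on T (sph_ball y e1)"
    using nc unfolding crit_points_def by blast
  obtain V where V: "sph_open V" "y \<in> V" "iter_normal_on p q V"
    using y unfolding fatou_set_def by blast
  obtain e2 where e2: "e2 > 0" "sph_ball y e2 \<subseteq> V" using V(1,2) unfolding sph_open_def by blast
  obtain b u0 where yb: "y = ch b u0"
  proof (cases y)
    case None then show ?thesis using that[of False 0] by (simp add: ch_def ichart_def)
  next
    case (Some u) then show ?thesis using that[of True u] by (simp add: ch_def)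
  qed
  obtain \<epsilon> \<psi> b' where e: "\<epsilon> > 0" "\<psi> holomorphic_on ball u0 \<epsilon>"
    "\<forall>u\<in>ball u0 \<epsilon>. T (ch b u) = ch b' (\<psi> u)"
    using LR by blast
  have "ch b' (\<psi> u0) \<noteq> None" using e(1,3) Ty yb by auto
  then obtain \<epsilon>' R where e': "\<epsilon>' > 0" "\<epsilon>' \<le> \<epsilon>" "R holomorphic_on ball u0 \<epsilon>'"
    "\<forall>u\<in>ball u0 \<epsilon>'. ch b' (\<psi> u) = Some (R u)"
    using to_Some[OF e(2) e(1)] by blast
  define \<rho> where "\<rho> = min \<epsilon>' (min e1 e2 / 2)"
  have \<rho>: "\<rho> > 0" "\<rho> \<le> \<epsilon>'" "2 * \<rho> \<le> e1" "2 * \<rho> \<le> e2" using e1 e2 e' unfolding \<rho>_def by auto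
  define B where "B = ball u0 \<rho>"
  have TR: "T (ch b u) = Some (R u)" if "u \<in> B" for u
    using that e(3) e'(2,4) \<rho>(2) unfolding B_def by auto
  have chB: "ch b u \<in> sph_ball y e1 \<and> ch b u \<in> V" if "u \<in> B" for u
  proof -
    have "chordal y (ch b u) \<le> 2 * cmod (u0 - u)" unfolding yb by (rule chordal_ch_le)
    also have "\<dots> < 2 * \<rho>" using that unfolding B_def by (simp add: dist_norm)
    finally show ?thesis using \<rho> e2(2) unfolding sph_ball_def by auto
  qed
  have injR: "inj_on R B"
  proof
    fix u v assume uv: "u \<in> B" "v \<in> B" "R u = R v"
    then have "T (ch b u) = T (ch b v)" using TR by simp
    then have "ch b u = ch b v" using e1(2) chB uv(1,2) by (meson inj_onD)
    then show "u = v" by (rule ch_inj)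
  qed
  have holR: "R holomorphic_on B" using e'(3) \<rho>(2) unfolding B_def by (auto intro: holomorphic_on_subset)
  have openR: "open (R ` S)" if "S \<subseteq> B" "open S" for S
    using that holR injR by (intro open_mapping_thm3) (auto intro: holomorphic_on_subset inj_on_subset)
  define V' where "V' = Some ` (R ` B)"
  have u0B: "u0 \<in> B" using \<rho> unfolding B_def by auto
  have TyV': "T y \<in> V'" using TR[OF u0B] yb u0B unfolding V'_def by auto
  have ball_in: "\<exists>\<epsilon>a>0. \<forall>b''. chordal (Some w) b'' < \<epsilon>a \<longrightarrow> (\<exists>w'. b'' = Some w' \<and> w' \<in> W0)"
    if W0o: "open W0" and wW0: "w \<in> W0" for w W0
  proof -
    obtain \<eta> where eta: "\<eta> > 0" "ball w \<eta> \<subseteq> W0" using openE[OF W0o wW0] by blast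
    from chordal_Some_near[OF eta(1), of w]
    obtain \<epsilon> where eps: "\<epsilon> > 0 \<and> (\<forall>b''. chordal (Some w) b'' < \<epsilon> \<longrightarrow> (\<exists>w'. b'' = Some w' \<and> cmod (w' - w) < \<eta>))" ..
    have "\<exists>w'. b'' = Some w' \<and> w' \<in> W0" if chb: "chordal (Some w) b'' < \<epsilon>" for b''
    proof -
      have "\<exists>w'. b'' = Some w' \<and> cmod (w' - w) < \<eta>" using eps chb by simp
      then obtain w' where w': "b'' = Some w'" "cmod (w' - w) < \<eta>" by blast
      then have "w' \<in> ball w \<eta>" by (simp add: dist_norm norm_minus_commute)
      then show ?thesis using w'(1) eta(2) by blast
    qed
    then show ?thesis using eps by blast
  qed
  have "sph_open V'"
    unfolding sph_open_def
  proof
    fix a' assume "a' \<in> V'"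
    then obtain w where w: "a' = Some w" "w \<in> R ` B" unfolding V'_def by auto
    have "open (R ` B)" using openR[of B] unfolding B_def by auto
    from ball_in[OF this w(2)] obtain \<epsilon>a where ea: "\<epsilon>a > 0 \<and> (\<forall>b''. chordal (Some w) b'' < \<epsilon>a \<longrightarrow> (\<exists>w'. b'' = Some w' \<and> w' \<in> R ` B))" ..
    have "sph_ball a' \<epsilon>a \<subseteq> V'"
    proof
      fix b'' assume "b'' \<in> sph_ball a' \<epsilon>a"
      then have "chordal (Some w) b'' < \<epsilon>a" using w(1) unfolding sph_ball_def by simp
      then have "\<exists>w'. b'' = Some w' \<and> w' \<in> R ` B" using ea by simp
      then show "b'' \<in> V'" unfolding V'_def by auto
    qed
    then show "\<exists>e>0. sph_ball a' e \<subseteq> V'" using ea by blast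
  qed
  moreover have "iter_normal_on p q V'"
    unfolding iter_normal_on_def
  proof
    fix ns :: "nat \<Rightarrow> nat"
    define ns' where "ns' = (\<lambda>k. Suc (ns k))"
    have ex: "\<exists>(s::nat \<Rightarrow> nat) (g :: complex option \<Rightarrow> complex option). strict_mono s \<and> (\<forall>a\<in>V. \<exists>e>0. \<forall>eps>0. \<exists>N. \<forall>k\<ge>N. \<forall>b\<in>V \<inter> sph_ball a e.
            chordal ((T ^^ ns' (s k)) b) (g b) < eps)"
      using spec[OF V(3)[unfolded iter_normal_on_def], of ns'] .
    obtain s :: "nat \<Rightarrow> nat" and g :: "complex option \<Rightarrow> complex option" where sg: "strict_mono s"
      "\<forall>a\<in>V. \<exists>e>0. \<forall>eps>0. \<exists>N. \<forall>k\<ge>N. \<forall>b\<in>V \<inter> sph_ball a e.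
            chordal ((T ^^ ns' (s k)) b) (g b) < eps"
      using ex by (elim exE conjE) (rule that; assumption)
    define g' where "g' v = g (ch b (inv_into B R (the v)))" for v
    have fin: "\<forall>a'\<in>V'. \<exists>e>0. \<forall>eps>0. \<exists>N. \<forall>k\<ge>N. \<forall>b''\<in>V' \<inter> sph_ball a' e.
            chordal ((T ^^ ns (s k)) b'') (g' b'') < eps"
    proof
      fix a' assume "a' \<in> V'"
      then obtain u where u: "u \<in> B" "a' = Some (R u)" unfolding V'_def by auto
      have aV: "ch b u \<in> V" using chB u(1) by blast
      obtain ea where ea: "ea > 0" "\<forall>eps>0. \<exists>N. \<forall>k\<ge>N. \<forall>b\<in>V \<inter> sph_ball (ch b u) ea.
            chordal ((T ^^ ns' (s k)) b) (g b) < eps"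
        using sg(2) aV by blast
      have "open B" unfolding B_def by simp
      then obtain r0 where r0: "r0 > 0" "ball u r0 \<subseteq> B" using u(1) openE by blast
      define ra where "ra = min r0 (ea / 2)"
      have ra: "ra > 0" "ball u ra \<subseteq> B" "2 * ra \<le> ea" using r0 ea unfolding ra_def by auto
      have "open (R ` ball u ra)" using openR ra(2) by auto
      moreover have "R u \<in> R ` ball u ra" using ra by auto
      ultimately have "\<exists>\<epsilon>a>0. \<forall>b''. chordal (Some (R u)) b'' < \<epsilon>a \<longrightarrow> (\<exists>w'. b'' = Some w' \<and> w' \<in> R ` ball u ra)"
        by (rule ball_in)
      then obtain \<epsilon>a where \<epsilon>a: "\<epsilon>a > 0"
        "\<forall>b''. chordal (Some (R u)) b'' < \<epsilon>a \<longrightarrow> (\<exists>w'. b'' = Some w' \<and> w' \<in> R ` ball u ra)"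
        by blast
      have "\<forall>eps>0. \<exists>N. \<forall>k\<ge>N. \<forall>b''\<in>V' \<inter> sph_ball a' \<epsilon>a. chordal ((T ^^ ns (s k)) b'') (g' b'') < eps"
      proof (intro allI impI)
        fix eps :: real assume "eps > 0"
        then obtain N where N: "\<forall>k\<ge>N. \<forall>b\<in>V \<inter> sph_ball (ch b u) ea.
            chordal ((T ^^ ns' (s k)) b) (g b) < eps" using ea(2) by blast
        have est: "chordal ((T ^^ ns (s k)) b'') (g' b'') < eps" if kN: "k \<ge> N" and bV: "b'' \<in> V' \<inter> sph_ball a' \<epsilon>a" for k b''
        proof -
          have "chordal (Some (R u)) b'' < \<epsilon>a" using bV u(2) unfolding sph_ball_def by simp
          then have "\<exists>w'. b'' = Some w' \<and> w' \<in> R ` ball u ra" using \<epsilon>a(2) by simp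
          then obtain u' where u': "u' \<in> ball u ra" "b'' = Some (R u')" by blast
          have u'B: "u' \<in> B" using u' ra(2) by auto
          have inv: "inv_into B R (R u') = u'" using injR u'B by (simp add: inv_into_f_f)
          have g'eq: "g' b'' = g (ch b u')" using u'(2) inv unfolding g'_def by simp
          have e1: "(T ^^ Suc (ns (s k))) (ch b u') = (T ^^ ns (s k)) (T (ch b u'))"
            by (simp add: funpow_swap1)
          have Teq: "(T ^^ ns (s k)) b'' = (T ^^ Suc (ns (s k))) (ch b u')"
            unfolding e1 TR[OF u'B] u'(2) by (rule refl)
          have "chordal (ch b u) (ch b u') \<le> 2 * cmod (u - u')" by (rule chordal_ch_le)
          also have "\<dots> < 2 * ra" using u'(1) by (simp add: dist_norm)
          finally have "ch b u' \<in> sph_ball (ch b u) ea" using ra(3) unfolding sph_ball_def by simp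
          moreover have "ch b u' \<in> V" using chB u'B by blast
          ultimately have "ch b u' \<in> V \<inter> sph_ball (ch b u) ea" by (rule IntI[rotated])
          moreover have Nk: "\<forall>b\<in>V \<inter> sph_ball (ch b u) ea. chordal ((T ^^ ns' (s k)) b) (g b) < eps"
            using spec[OF N, of k] kN by (rule mp)
          ultimately have "chordal ((T ^^ ns' (s k)) (ch b u')) (g (ch b u')) < eps"
            by (rule bspec[rotated])
          then have "chordal ((T ^^ Suc (ns (s k))) (ch b u')) (g (ch b u')) < eps"
            unfolding ns'_def by simp
          then show ?thesis unfolding Teq g'eq .
        qed
        show "\<exists>N. \<forall>k\<ge>N. \<forall>b''\<in>V' \<inter> sph_ball a' \<epsilon>a. chordal ((T ^^ ns (s k)) b'') (g' b'') < eps"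
        proof (intro exI[of _ N] allI impI ballI)
          fix k b'' assume "N \<le> k" "b'' \<in> V' \<inter> sph_ball a' \<epsilon>a"
          then show "chordal ((T ^^ ns (s k)) b'') (g' b'') < eps" by (rule est)
        qed
      qed
      then show "\<exists>e>0. \<forall>eps>0. \<exists>N. \<forall>k\<ge>N. \<forall>b''\<in>V' \<inter> sph_ball a' e.
            chordal ((T ^^ ns (s k)) b'') (g' b'') < eps" using \<epsilon>a(1) by blast
    qed
    have conj: "strict_mono s \<and> (\<forall>a\<in>V'. \<exists>e>0. \<forall>eps>0. \<exists>N. \<forall>k\<ge>N. \<forall>b\<in>V' \<inter> sph_ball a e.
            chordal ((T ^^ ns (s k)) b) (g' b) < eps)"
      using sg(1) fin by (rule conjI)
    show "\<exists>(s::nat\<Rightarrow>nat) (g::complex option \<Rightarrow> complex option). strict_mono s \<and> (\<forall>a\<in>V'. \<exists>e>0. \<forall>eps>0. \<exists>N. \<forall>k\<ge>N. \<forall>b\<in>V' \<inter> sph_ball a e.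
            chordal ((T ^^ ns (s k)) b) (g b) < eps)"
      by (rule exI[where x=s], rule exI[where x=g'], rule conj)
  qed
  ultimately show ?thesis using TyV' unfolding fatou_set_def by blast
qed

end

context rm begin

lemma fr_deriv:
  assumes "poly q c \<noteq> 0"
  shows "(fr has_field_derivative
          (poly (pderiv p) c * poly q c - poly p c * poly (pderiv q) c) / (poly q c * poly q c)) (at c)"
  unfolding fr_def[abs_def]
  by (rule DERIV_divide[OF poly_DERIV poly_DERIV assms])

lemma two_preimages:
  assumes Tinf: "T None \<noteq> Some a"
    and nc: "\<forall>y. T (Some y) = Some a \<longrightarrow> Some y \<notin> crit_points p q"
  shows "\<exists>y1 y2. y1 \<noteq> y2 \<and> T (Some y1) = Some a \<and> T (Some y2) = Some a"
proof -
  define P where "P = p - smult a q"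
  have root_pre: "T (Some y) = Some a" if "poly P y = 0" for y
  proof -
    have "poly q y \<noteq> 0"
    proof
      assume "poly q y = 0"
      then have "poly p y \<noteq> 0" by (rule no_common_root)
      then show False using that \<open>poly q y = 0\<close> by (simp add: P_def)
    qed
    moreover have "poly p y = a * poly q y" using that by (simp add: P_def)
    ultimately show ?thesis by (simp add: T_Some)
  qed
  define dp where "dp = degree p"
  define dq where "dq = degree q"
  have d2: "2 \<le> max dp dq" using deg2 by (simp add: rat_degree_def dp_def dq_def)
  have degP: "2 \<le> degree P"
  proof (cases "dq < dp")
    case True
    then have "coeff P dp = lead_coeff p" by (simp add: P_def dp_def dq_def coeff_eq_0)
    then have "coeff P dp \<noteq> 0" using p_nz by simp
    then have "dp \<le> degree P" by (rule le_degree)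
    then show ?thesis using d2 True by simp
  next
    case False
    show ?thesis
    proof (cases "dp < dq")
      case True
      then have "T None = Some 0" by (simp add: rat_map_def dp_def dq_def)
      then have "a \<noteq> 0" using Tinf by auto
      have "coeff P dq = - a * lead_coeff q" using True by (simp add: P_def dp_def dq_def coeff_eq_0)
      then have "coeff P dq \<noteq> 0" using q_nz \<open>a \<noteq> 0\<close> by simp
      then have "dq \<le> degree P" by (rule le_degree)
      then show ?thesis using d2 True by simp
    next
      case F2: False
      then have eq: "dp = dq" using False by simp
      then have "T None = Some (lead_coeff p / lead_coeff q)" by (simp add: rat_map_def dp_def dq_def)
      then have "lead_coeff p / lead_coeff q \<noteq> a" using Tinf by auto
      then have "lead_coeff p - a * lead_coeff q \<noteq> 0" using q_nz by (auto simp: field_simps)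
      moreover have "coeff P dp = lead_coeff p - a * lead_coeff q" using eq by (simp add: P_def dp_def dq_def)
      ultimately have "dp \<le> degree P" by (intro le_degree) simp
      then show ?thesis using d2 eq by simp
    qed
  qed
  obtain c where c: "poly P c = 0" using alg_closed_imp_poly_has_root[of P] degP by auto
  have Tc: "T (Some c) = Some a" using root_pre[OF c] .
  have qc: "poly q c \<noteq> 0" using Tc by (auto simp: T_Some split: if_splits)
  have pc: "poly p c = a * poly q c" using c by (simp add: P_def)
  obtain e where e: "e > 0" "inj_on T (sph_ball (Some c) e)"
    using nc Tc unfolding crit_points_def by blast
  obtain \<epsilon> where eps: "\<epsilon> > 0" "\<forall>u\<in>ball c \<epsilon>. poly q u \<noteq> 0"
    using nz_nbhd[OF poly_isCont qc] by blast
  define \<rho> where "\<rho> = min \<epsilon> (e / 2)"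
  have \<rho>: "\<rho> > 0" "\<rho> \<le> \<epsilon>" "2 * \<rho> \<le> e" using e eps unfolding \<rho>_def by auto
  have holf: "fr holomorphic_on ball c \<rho>"
    unfolding fr_def using eps \<rho> by (intro holomorphic_intros) auto
  have injf: "inj_on fr (ball c \<rho>)"
  proof
    fix u v assume uv: "u \<in> ball c \<rho>" "v \<in> ball c \<rho>" "fr u = fr v"
    have qu: "poly q u \<noteq> 0" "poly q v \<noteq> 0" using eps uv \<rho> by auto
    have "T (Some u) = T (Some v)" using uv(3) qu by (simp add: T_Some fr_def)
    moreover have "Some u \<in> sph_ball (Some c) e" "Some v \<in> sph_ball (Some c) e"
    proof -
      have "chordal (Some c) (Some u) \<le> 2 * cmod (c - u)" by (rule chordal_Some_le)
      also have "\<dots> < e" using uv(1) \<rho> by (simp add: dist_norm)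
      finally show "Some u \<in> sph_ball (Some c) e" unfolding sph_ball_def by simp
      have "chordal (Some c) (Some v) \<le> 2 * cmod (c - v)" by (rule chordal_Some_le)
      also have "\<dots> < e" using uv(2) \<rho> by (simp add: dist_norm)
      finally show "Some v \<in> sph_ball (Some c) e" unfolding sph_ball_def by simp
    qed
    ultimately have "Some u = Some v" using e(2) by (meson inj_onD)
    then show "u = v" by simp
  qed
  have "deriv fr c \<noteq> 0"
    using holomorphic_injective_imp_regular[OF holf _ injf] \<rho> by simp
  moreover have "deriv fr c = (poly (pderiv p) c * poly q c - poly p c * poly (pderiv q) c) / (poly q c * poly q c)"
    by (rule DERIV_imp_deriv[OF fr_deriv[OF qc]])
  ultimately have "poly (pderiv p) c * poly q c - poly p c * poly (pderiv q) c \<noteq> 0" by auto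
  then have "poly q c * (poly (pderiv p) c - a * poly (pderiv q) c) \<noteq> 0"
    unfolding pc by (simp add: algebra_simps)
  then have dPc: "poly (pderiv P) c \<noteq> 0" by (simp add: P_def pderiv_diff pderiv_smult)
  have "[:-c, 1:] dvd P" using c by (simp add: poly_eq_0_iff_dvd)
  then obtain Q where Q: "P = [:-c, 1:] * Q" by (elim dvdE)
  have "P \<noteq> 0" using degP by auto
  then have "Q \<noteq> 0" using Q by auto
  have dl: "degree [:-c, 1::complex:] = 1" by simp
  have "degree P = degree [:-c, 1:] + degree Q" unfolding Q
    by (rule degree_mult_eq) (use \<open>Q \<noteq> 0\<close> in auto)
  then have "degree P = 1 + degree Q" unfolding dl .
  then have "0 < degree Q" using degP by simp
  then obtain c' where c': "poly Q c' = 0" using alg_closed_imp_poly_has_root[of Q] by auto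
  have "pderiv P = [:-c, 1:] * pderiv Q + Q * pderiv [:-c, 1:]" unfolding Q by (rule pderiv_mult)
  then have "poly (pderiv P) c = poly Q c" by (simp add: pderiv_pCons)
  then have "poly Q c \<noteq> 0" using dPc by simp
  then have "c' \<noteq> c" using c' by auto
  moreover have "poly P c' = 0" using c' Q by simp
  ultimately show ?thesis using Tc root_pre by blast
qed

end

lemma Mo_hol_S:
  assumes "mrep F z0" "open S" "z0 \<in> S" "\<And>z. z \<in> S \<Longrightarrow> F z \<noteq> Some c"
  shows "(\<lambda>z. Mo a b c (F z)) field_differentiable at z0"
proof -
  obtain \<rho>1 \<phi> bb where r1: "\<rho>1 > 0" "\<phi> holomorphic_on ball z0 \<rho>1" "\<forall>z\<in>ball z0 \<rho>1. F z = ch bb (\<phi> z)"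
    using assms(1) unfolding mrep_def by blast
  obtain r2 where r2: "r2 > 0" "ball z0 r2 \<subseteq> S" using assms(2,3) openE by blast
  define \<rho> where "\<rho> = min \<rho>1 r2"
  have r4: "\<forall>z\<in>ball z0 \<rho>. F z \<noteq> Some c"
  proof
    fix z assume "z \<in> ball z0 \<rho>"
    then have "z \<in> ball z0 r2" unfolding \<rho>_def by simp
    then have "z \<in> S" using r2(2) by blast
    then show "F z \<noteq> Some c" by (rule assms(4))
  qed
  have r: "\<rho> > 0" "\<phi> holomorphic_on ball z0 \<rho>" "\<forall>z\<in>ball z0 \<rho>. F z = ch bb (\<phi> z)"
    "\<forall>z\<in>ball z0 \<rho>. F z \<noteq> Some c"
    using r1 r2 r4 unfolding \<rho>_def by (auto intro: holomorphic_on_subset)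
  define k where "k = (b - c) / (b - a)"
  have "(\<lambda>z. Mo a b c (F z)) holomorphic_on ball z0 \<rho>"
  proof (cases bb)
    case True
    have ne: "\<phi> z \<noteq> c" if "z \<in> ball z0 \<rho>" for z
      using r(3,4) that True by (auto simp: ch_def)
    have "(\<lambda>z. k * ((\<phi> z - a) / (\<phi> z - c))) holomorphic_on ball z0 \<rho>"
      using ne r(2) by (intro holomorphic_intros) auto
    then show ?thesis
      by (rule holomorphic_transform) (use r(3) True in \<open>simp add: ch_def Mo_def k_def\<close>)
  next
    case False
    have ne: "1 - c * \<phi> z \<noteq> 0" if z: "z \<in> ball z0 \<rho>" for z
    proof
      assume h: "1 - c * \<phi> z = 0"
      then have nz: "\<phi> z \<noteq> 0" by auto
      moreover have "c = 1 / \<phi> z" using h nz by (simp add: field_simps)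
      ultimately have "F z = Some c" using r(3) z False by (simp add: ch_def ichart_def)
      then show False using r(4) z by blast
    qed
    have "(\<lambda>z. k * ((1 - a * \<phi> z) / (1 - c * \<phi> z))) holomorphic_on ball z0 \<rho>"
      using ne r(2) by (intro holomorphic_intros) auto
    then show ?thesis
    proof (rule holomorphic_transform)
      fix z assume z: "z \<in> ball z0 \<rho>"
      show "k * ((1 - a * \<phi> z) / (1 - c * \<phi> z)) = Mo a b c (F z)"
      proof (cases "\<phi> z = 0")
        case True
        then show ?thesis using r(3) z False by (simp add: ch_def ichart_def Mo_def k_def)
      next
        case nz: False
        have "(1/\<phi> z - a) / (1/\<phi> z - c) = (1 - a * \<phi> z) / (1 - c * \<phi> z)"
          using nz ne[OF z] by (simp add: field_simps)
        then show ?thesis using r(3) z False nz by (simp add: ch_def ichart_def Mo_def k_def)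
      qed
    qed
  qed
  then show ?thesis using r(1) by (intro holomorphic_on_imp_differentiable_at) auto
qed

lemma Mo_0:
  assumes "a \<noteq> b" "b \<noteq> c" "v \<noteq> Some c" "Mo a b c v = 0"
  shows "v = Some a"
proof (cases v)
  case None
  then show ?thesis using assms by (simp add: Mo_def)
next
  case (Some w)
  then have "w \<noteq> c" using assms(3) by simp
  then show ?thesis using assms Some by (simp add: Mo_def)
qed

lemma Mo_1:
  assumes "a \<noteq> b" "b \<noteq> c" "a \<noteq> c" "v \<noteq> Some c" "Mo a b c v = 1"
  shows "v = Some b"
proof (cases v)
  case None
  then have "b - c = b - a" using assms by (simp add: Mo_def field_simps)
  then show ?thesis using assms by simp
next
  case (Some w)
  then have wc: "w \<noteq> c" using assms(4) by simp
  have ba: "b - a \<noteq> 0" using assms by simp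
  have "(b - c) * (w - a) = (b - a) * (w - c)"
    using assms(5) Some wc ba by (simp add: Mo_def field_simps)
  then have "(a - c) * (w - b) = 0" by (simp add: algebra_simps)
  then have "w = b" using assms(3) by simp
  then show ?thesis using Some by simp
qed

context rm begin

lemma core:
  assumes fin: "\<forall>j\<le>n. (T ^^ j) (Some x) \<noteq> None"
    and dpos: "\<delta> > 0"
    and omit: "\<And>y v. y \<in> ball x \<delta> \<Longrightarrow> v \<in> {a, b, c} \<Longrightarrow> (T ^^ n) (Some y) \<noteq> Some v"
    and abc: "a \<noteq> b" "b \<noteq> c" "a \<noteq> c"
    and zx: "(T ^^ n) (Some x) = Some z"
    and Rm: "cmod (Mo a b c (Some z)) \<le> Rm"
  shows "cmod ((b - c) / (b - a) * ((a - c) / (z - c)\<^sup>2)) * \<delta> * cmod (deriv (fr ^^ n) x)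
           \<le> 4 * exp (pi * exp (pi * (2 + 2 * Rm + 12 * (1/2) / (1 - 1/2))))"
proof -
  define B where "B = exp (pi * exp (pi * (2 + 2 * Rm + 12 * (1/2) / (1 - 1/2))))"
  define F where "F = (\<lambda>\<zeta>. (T ^^ n) (Some (x + of_real \<delta> * \<zeta>)))"
  define H where "H = (\<lambda>\<zeta>. Mo a b c (F \<zeta>))"
  have inball: "x + of_real \<delta> * \<zeta> \<in> ball x \<delta>" if "\<zeta> \<in> ball 0 1" for \<zeta>
  proof -
    have "cmod (of_real \<delta> * \<zeta>) = \<delta> * cmod \<zeta>" using dpos by (simp add: norm_mult)
    also have "\<dots> < \<delta> * 1" using that dpos by (intro mult_strict_left_mono) auto
    finally show ?thesis by (simp add: dist_norm)
  qed
  have Fne: "F \<zeta> \<noteq> Some v" if "\<zeta> \<in> ball 0 1" "v \<in> {a, b, c}" for \<zeta> v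
    unfolding F_def using omit[OF inball[OF that(1)] that(2)] .
  have mrepF: "mrep F \<zeta>0" for \<zeta>0
  proof -
    have "mrep ((T ^^ n) \<circ> (\<lambda>\<zeta>. Some (x + of_real \<delta> * \<zeta>))) \<zeta>0"
      by (rule mrep_iter[OF mrep_Some_affine])
    then show ?thesis unfolding F_def by (simp add: o_def)
  qed
  have holH: "H holomorphic_on ball 0 1"
    unfolding holomorphic_on_def
  proof
    fix \<zeta> assume "\<zeta> \<in> ball (0::complex) 1"
    moreover have Fc: "\<And>\<zeta>. \<zeta> \<in> ball 0 1 \<Longrightarrow> F \<zeta> \<noteq> Some c" using Fne by blast
    ultimately have "H field_differentiable at \<zeta>"
      unfolding H_def by (rule Mo_hol_S[OF mrepF open_ball])
    then show "H field_differentiable at \<zeta> within ball 0 1"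
      by (rule field_differentiable_at_within)
  qed
  have H01: "H \<zeta> \<noteq> 0 \<and> H \<zeta> \<noteq> 1" if "\<zeta> \<in> ball 0 1" for \<zeta>
  proof
    have nc: "F \<zeta> \<noteq> Some c" using Fne[OF that] by auto
    show "H \<zeta> \<noteq> 0"
    proof
      assume "H \<zeta> = 0"
      then have "F \<zeta> = Some a" using Mo_0[OF abc(1,2) nc] unfolding H_def by blast
      then show False using Fne[OF that] by auto
    qed
    show "H \<zeta> \<noteq> 1"
    proof
      assume "H \<zeta> = 1"
      then have "F \<zeta> = Some b" using Mo_1[OF abc nc] unfolding H_def by blast
      then show False using Fne[OF that] by auto
    qed
  qed
  have F0: "F 0 = Some z" using zx unfolding F_def by simp
  define H1 where "H1 = (\<lambda>\<zeta>. H (\<zeta> / 2))"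
  have holH1: "H1 holomorphic_on cball 0 1"
  proof -
    have "(\<lambda>\<zeta>::complex. \<zeta> / 2) ` cball 0 1 \<subseteq> ball 0 1"
      by (auto simp: norm_divide)
    then have "(H \<circ> (\<lambda>\<zeta>. \<zeta> / 2)) holomorphic_on cball 0 1"
      by (intro holomorphic_on_compose_gen[OF _ holH]) (auto intro!: holomorphic_intros)
    then show ?thesis unfolding H1_def by (simp add: o_def)
  qed
  have bndH: "cmod (H \<xi>) \<le> B" if "cmod (0 - \<xi>) = 1/4" for \<xi>
  proof -
    have n2: "cmod (2 * \<xi>) \<le> 1/2" using that by (simp add: norm_mult)
    have "cmod (H1 (2 * \<xi>)) \<le> B"
      unfolding B_def
    proof (rule Schottky[OF holH1 _ _ _ _ n2])
      show "cmod (H1 0) \<le> Rm" using Rm F0 unfolding H1_def H_def by simp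
      show "\<And>w. w \<in> cball 0 1 \<Longrightarrow> \<not> (H1 w = 0 \<or> H1 w = 1)"
        unfolding H1_def using H01 by (auto simp: norm_divide)
    qed auto
    then show ?thesis unfolding H1_def by simp
  qed
  have "cmod ((deriv ^^ 1) H 0) \<le> fact 1 * B / (1/4) ^ 1"
  proof (rule Cauchy_inequality)
    show "H holomorphic_on ball 0 (1/4)" using holH by (rule holomorphic_on_subset) auto
    show "continuous_on (cball 0 (1/4)) H"
      using holomorphic_on_imp_continuous_on[OF holH] by (rule continuous_on_subset) auto
  qed (use bndH in auto)
  then have dH: "cmod (deriv H 0) \<le> 4 * B" by simp
  obtain \<rho> where r: "\<rho> > 0" "(fr ^^ n) holomorphic_on ball x \<rho>"
    "\<forall>y\<in>ball x \<rho>. (T ^^ n) (Some y) = Some ((fr ^^ n) y)"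
    using iter_fin[OF fin] by blast
  have zfr: "z = (fr ^^ n) x" using r(1,3) zx by auto
  have zc: "z \<noteq> c" using omit[of x c] dpos zx by auto
  define k where "k = (b - c) / (b - a)"
  define Mf where "Mf = (\<lambda>w. k * ((w - a) / (w - c)))"
  define Dm where "Dm = k * ((a - c) / (z - c)\<^sup>2)"
  have dC0: "(Mf has_field_derivative k * ((1 * (z - c) - (z - a) * 1) / ((z - c) * (z - c)))) (at z)"
    unfolding Mf_def
    by (intro DERIV_cmult DERIV_divide) (use zc in \<open>auto intro!: derivative_eq_intros\<close>)
  have "k * ((1 * (z - c) - (z - a) * 1) / ((z - c) * (z - c))) = Dm"
    unfolding Dm_def using zc by (simp add: field_simps power2_eq_square)
  with dC0 have dC: "(Mf has_field_derivative Dm) (at ((fr ^^ n) (x + of_real \<delta> * 0)))" using zfr by simp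
  have dA: "((\<lambda>\<zeta>. x + of_real \<delta> * \<zeta>) has_field_derivative of_real \<delta>) (at 0)"
    by (auto intro!: derivative_eq_intros)
  have dB: "((fr ^^ n) has_field_derivative deriv (fr ^^ n) x) (at (x + of_real \<delta> * 0))"
    using holomorphic_derivI[OF r(2) open_ball, of x] r(1) by simp
  have dAB: "((\<lambda>\<zeta>. (fr ^^ n) (x + of_real \<delta> * \<zeta>)) has_field_derivative deriv (fr ^^ n) x * of_real \<delta>) (at 0)"
    by (rule DERIV_chain2[OF dB dA])
  have dG: "((\<lambda>\<zeta>. Mf ((fr ^^ n) (x + of_real \<delta> * \<zeta>))) has_field_derivative Dm * (deriv (fr ^^ n) x * of_real \<delta>)) (at 0)"
    by (rule DERIV_chain2[OF dC dAB])
  define S0 where "S0 = ball (0::complex) (min 1 (\<rho> / \<delta>))"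
  have oS0: "open S0" unfolding S0_def by simp
  have zS0: "0 \<in> S0" unfolding S0_def using r(1) dpos by simp
  have eqS0: "Mf ((fr ^^ n) (x + of_real \<delta> * \<zeta>)) = H \<zeta>" if "\<zeta> \<in> S0" for \<zeta>
  proof -
    have "cmod \<zeta> < \<rho> / \<delta>" using that unfolding S0_def by simp
    then have "\<delta> * cmod \<zeta> < \<rho>" using dpos by (simp add: field_simps)
    then have "x + of_real \<delta> * \<zeta> \<in> ball x \<rho>" using dpos by (simp add: dist_norm norm_mult)
    then have "F \<zeta> = Some ((fr ^^ n) (x + of_real \<delta> * \<zeta>))" using r(3) unfolding F_def by blast
    then show ?thesis unfolding H_def Mo_def Mf_def k_def by simp
  qed
  have "(H has_field_derivative Dm * (deriv (fr ^^ n) x * of_real \<delta>)) (at 0)"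
    by (rule has_field_derivative_transform_within_open[OF dG oS0 zS0 eqS0])
  then have "deriv H 0 = Dm * (deriv (fr ^^ n) x * of_real \<delta>)" by (rule DERIV_imp_deriv)
  then have "cmod (deriv H 0) = cmod Dm * \<delta> * cmod (deriv (fr ^^ n) x)"
    using dpos by (simp add: norm_mult)
  then show ?thesis using dH unfolding Dm_def k_def B_def by simp
qed

end

context rm begin

lemma instance_bound:
  assumes fin: "\<forall>j\<le>n. (T ^^ j) (Some x) \<noteq> None"
    and dpos: "\<delta> > 0"
    and omit: "\<And>y v. y \<in> ball x \<delta> \<Longrightarrow> v \<in> {a, b, c} \<Longrightarrow> (T ^^ n) (Some y) \<noteq> Some v"
    and abc: "a \<noteq> b" "b \<noteq> c" "a \<noteq> c"
    and zx: "(T ^^ n) (Some x) = Some z"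
    and hz: "cmod z \<le> R0" and ha: "cmod a \<le> R1" and hb: "cmod b \<le> R1" and hc: "cmod c \<le> R1"
    and mu: "\<mu> > 0" and dba: "\<mu> \<le> cmod (b - a)" and dbc: "\<mu> \<le> cmod (b - c)" and dac: "\<mu> \<le> cmod (a - c)"
    and dzc: "\<mu> / 2 \<le> cmod (z - c)"
    and rpos: "r > 0" and dr: "1 / r \<le> cmod (deriv (fr ^^ n) x)"
  shows "\<delta> \<le> 4 * exp (pi * exp (pi * (2 + 2 * ((2 * R1 / \<mu>) * ((R0 + R1) / (\<mu> / 2))) + 12 * (1/2) / (1 - 1/2))))
               / ((\<mu> / (2 * R1)) * (\<mu> / (R0 + R1)\<^sup>2)) * r"
proof -
  define Rm where "Rm = (2 * R1 / \<mu>) * ((R0 + R1) / (\<mu> / 2))"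
  define mm where "mm = (\<mu> / (2 * R1)) * (\<mu> / (R0 + R1)\<^sup>2)"
  define X where "X = 4 * exp (pi * exp (pi * (2 + 2 * Rm + 12 * (1/2) / (1 - 1/2))))"
  have nba: "cmod (b - a) > 0" using dba mu by linarith
  have nzc: "cmod (z - c) > 0" using dzc mu by linarith
  have R1pos: "R1 > 0"
  proof -
    have "\<mu> \<le> cmod b + cmod a" using dba norm_triangle_ineq4[of b a] by linarith
    then show ?thesis using ha hb mu by linarith
  qed
  have R0R1: "R0 + R1 > 0" using R1pos hz norm_ge_zero[of z] by linarith
  have bc_le: "cmod (b - c) \<le> 2 * R1" using norm_triangle_ineq4[of b c] hb hc by linarith
  have ba_le: "cmod (b - a) \<le> 2 * R1" using norm_triangle_ineq4[of b a] hb ha by linarith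
  have za_le: "cmod (z - a) \<le> R0 + R1" using norm_triangle_ineq4[of z a] hz ha by linarith
  have zc_le: "cmod (z - c) \<le> R0 + R1" using norm_triangle_ineq4[of z c] hz hc by linarith
  have "cmod (Mo a b c (Some z)) = cmod (b - c) / cmod (b - a) * (cmod (z - a) / cmod (z - c))"
    by (simp add: Mo_def norm_mult norm_divide)
  also have "\<dots> \<le> (2 * R1 / \<mu>) * ((R0 + R1) / (\<mu> / 2))"
  proof (rule mult_mono)
    show "cmod (b - c) / cmod (b - a) \<le> 2 * R1 / \<mu>"
      by (rule frac_le) (use bc_le R1pos mu dba in auto)
    show "cmod (z - a) / cmod (z - c) \<le> (R0 + R1) / (\<mu> / 2)"
      by (rule frac_le) (use za_le R0R1 mu dzc in auto)
  qed (use R1pos mu in auto)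
  finally have Mz: "cmod (Mo a b c (Some z)) \<le> Rm" unfolding Rm_def .
  have core': "cmod ((b - c) / (b - a) * ((a - c) / (z - c)\<^sup>2)) * \<delta> * cmod (deriv (fr ^^ n) x) \<le> X"
    unfolding X_def by (rule core[OF fin dpos omit abc zx Mz])
  have "cmod ((b - c) / (b - a) * ((a - c) / (z - c)\<^sup>2)) = cmod (b - c) / cmod (b - a) * (cmod (a - c) / (cmod (z - c))\<^sup>2)"
    by (simp add: norm_mult norm_divide norm_power)
  also have "\<dots> \<ge> mm"
    unfolding mm_def
  proof (rule mult_mono)
    show "\<mu> / (2 * R1) \<le> cmod (b - c) / cmod (b - a)"
      by (rule frac_le) (use dbc nba ba_le in auto)
    have "(cmod (z - c))\<^sup>2 \<le> (R0 + R1)\<^sup>2" using zc_le by (intro power_mono) auto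
    then show "\<mu> / (R0 + R1)\<^sup>2 \<le> cmod (a - c) / (cmod (z - c))\<^sup>2"
      by (intro frac_le) (use dac nzc in auto)
  qed (use R1pos mu in auto)
  finally have Dm_ge: "mm \<le> cmod ((b - c) / (b - a) * ((a - c) / (z - c)\<^sup>2))" .
  have mmpos: "mm > 0" unfolding mm_def using mu R1pos R0R1 by (intro mult_pos_pos divide_pos_pos) auto
  have "mm * \<delta> * (1 / r) \<le> cmod ((b - c) / (b - a) * ((a - c) / (z - c)\<^sup>2)) * \<delta> * cmod (deriv (fr ^^ n) x)"
    using Dm_ge dr dpos mmpos rpos by (intro mult_mono) auto
  also have "\<dots> \<le> X" by (rule core')
  finally have h: "mm * \<delta> * (1 / r) \<le> X" .
  then have "mm * \<delta> * (1 / r) * r \<le> X * r" using rpos by (intro mult_right_mono) auto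
  then have "mm * \<delta> \<le> X * r" using rpos by simp
  then have "\<delta> \<le> X / mm * r" using mmpos by (simp add: field_simps)
  then show ?thesis unfolding X_def Rm_def mm_def .
qed

end

lemma sub_closure: "a \<in> S \<Longrightarrow> a \<in> sph_closure S"
  unfolding sph_closure_def by (intro CollectI allI impI bexI[of _ a]) auto

theorem lemma3p9:
  fixes p q :: "complex poly" and E U :: "complex set"
  assumes "coprime p q" and "rat_degree p q \<ge> 2"
    and "None \<notin> julia_set p q" and "bounded {y. Some y \<in> julia_set p q}"
    and "compact E" and "E \<noteq> {}"
    and "open U" and "simply_connected U" and "E \<subseteq> U"
    and "\<forall>u\<in>U. Some u \<notin> postcrit p q"
    and "\<exists>u\<in>U. Some u \<in> julia_set p q"
    and "\<forall>k w. (rat_map p q ^^ k) w \<in> Some ` E \<longrightarrow> w \<noteq> None"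
    and "bounded {x. \<exists>k. (rat_map p q ^^ k) (Some x) \<in> Some ` E}"
  shows "\<exists>C>0. \<forall>z n x r. z \<in> E \<and> Some z \<notin> julia_set p q
            \<and> (rat_map p q ^^ n) (Some x) = Some z \<and> r > 0
            \<and> cmod (deriv ((\<lambda>w. poly p w / poly q w) ^^ n) x) \<ge> 1 / r
            \<longrightarrow> infdist x {y. Some y \<in> julia_set p q} \<le> C * r"
proof -
  interpret rm p q using assms(1,2) by unfold_locales
  define Jf where "Jf = {y. Some y \<in> julia_set p q}"
  obtain w0 where w0: "w0 \<in> U" "Some w0 \<in> julia_set p q" using assms(11) by blast
  have pc: "Some w0 \<notin> postcrit p q" using assms(10) w0(1) by blast
  have ncrit: "y \<notin> crit_points p q" if h: "(T ^^ Suc m) y = Some w0" for m y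
  proof
    assume "y \<in> crit_points p q"
    then have "Some w0 \<in> (T ^^ Suc m) ` crit_points p q" by (rule image_eqI[where f="T ^^ Suc m" and x=y, OF h[symmetric]])
    then have "Some w0 \<in> (\<Union>n\<in>{1..}. (T ^^ n) ` crit_points p q)"
      by (intro UN_I[of "Suc m"]) auto
    then have "Some w0 \<in> postcrit p q"
      unfolding postcrit_def by (rule sub_closure)
    with pc show False by blast
  qed
  have KJ: "\<forall>y. (T ^^ m) y = Some w0 \<longrightarrow> y \<in> julia_set p q" for m
  proof (induction m)
    case 0 show ?case using w0(2) by simp
  next
    case (Suc m)
    show ?case
    proof (intro allI impI)
      fix y assume h: "(T ^^ Suc m) y = Some w0"
      have "(T ^^ m) (T y) = Some w0" using h by (simp add: funpow_swap1)
      then have TJ: "T y \<in> julia_set p q" using Suc.IH by blast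
      have "T y \<noteq> None"
      proof
        assume "T y = None"
        then show False using TJ assms(3) by simp
      qed
      moreover have "y \<notin> crit_points p q" using ncrit[OF h] .
      ultimately show "y \<in> julia_set p q" using fatou_forward TJ unfolding julia_set_def by blast
    qed
  qed
  have KJ': "y \<in> julia_set p q" if "(T ^^ m) y = Some w0" for m y using KJ that by blast
  have T2: "(T ^^ Suc (Suc 0)) y = T (T y)" for y by simp
  have "T None \<noteq> Some w0"
  proof
    assume "T None = Some w0"
    then have "(T ^^ Suc 0) None = Some w0" by simp
    then show False using KJ' assms(3) by blast
  qed
  moreover have "\<forall>y. T (Some y) = Some w0 \<longrightarrow> Some y \<notin> crit_points p q"
    using ncrit[of 0] by simp
  ultimately obtain b1 b2 where b: "b1 \<noteq> b2" "T (Some b1) = Some w0" "T (Some b2) = Some w0"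
    using two_preimages by blast
  have pre2: "\<exists>y1 y2. y1 \<noteq> y2 \<and> T (Some y1) = Some bb \<and> T (Some y2) = Some bb"
    if bb: "T (Some bb) = Some w0" for bb
  proof (rule two_preimages)
    show "T None \<noteq> Some bb"
    proof
      assume "T None = Some bb"
      then have "(T ^^ Suc (Suc 0)) None = Some w0" using bb by (simp only: T2)
      then show False using KJ' assms(3) by blast
    qed
    show "\<forall>y. T (Some y) = Some bb \<longrightarrow> Some y \<notin> crit_points p q"
    proof (intro allI impI)
      fix y assume "T (Some y) = Some bb"
      then have "(T ^^ Suc (Suc 0)) (Some y) = Some w0" using bb by (simp only: T2)
      then show "Some y \<notin> crit_points p q" by (rule ncrit)
    qed
  qed
  obtain c1 c2 where c12: "c1 \<noteq> c2" "T (Some c1) = Some b1" "T (Some c2) = Some b1"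
    using pre2[OF b(2)] by blast
  obtain c3 where c3: "T (Some c3) = Some b2" using pre2[OF b(3)] by blast
  have c13: "c1 \<noteq> c3" using c12(2) c3 b(1) by auto
  have c23: "c2 \<noteq> c3" using c12(3) c3 b(1) by auto
  have omitK: "Some y \<in> julia_set p q" if "(T ^^ n) (Some y) = Some k" "k \<in> {c1, c2, c3}" for n y k
  proof -
    have "T (T (Some k)) = Some w0" using that(2) c12 c3 b by auto
    then have "(T ^^ (Suc (Suc 0) + n)) (Some y) = Some w0"
      using that(1) by (simp only: funpow_add o_apply T2)
    then show ?thesis by (rule KJ')
  qed
  obtain R0' where R0': "\<forall>z\<in>E. cmod z \<le> R0'"
    using compact_imp_bounded[OF assms(5)] unfolding bounded_iff by blast
  define R0 where "R0 = max R0' 0"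
  have R0: "\<And>z. z \<in> E \<Longrightarrow> cmod z \<le> R0" using R0' unfolding R0_def by force
  define R1 where "R1 = cmod c1 + cmod c2 + cmod c3 + 1"
  have R1: "cmod c1 \<le> R1" "cmod c2 \<le> R1" "cmod c3 \<le> R1" unfolding R1_def by auto
  define \<mu> where "\<mu> = min (cmod (c1 - c2)) (min (cmod (c1 - c3)) (cmod (c2 - c3)))"
  have mu: "\<mu> > 0" using c12(1) c13 c23 unfolding \<mu>_def by auto
  have mu_le: "\<mu> \<le> cmod (c1 - c2)" "\<mu> \<le> cmod (c1 - c3)" "\<mu> \<le> cmod (c2 - c3)"
    "\<mu> \<le> cmod (c2 - c1)" "\<mu> \<le> cmod (c3 - c1)" "\<mu> \<le> cmod (c3 - c2)"
    unfolding \<mu>_def by (auto simp: norm_minus_commute)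
  define C where "C = 4 * exp (pi * exp (pi * (2 + 2 * ((2 * R1 / \<mu>) * ((R0 + R1) / (\<mu> / 2))) + 12 * (1/2) / (1 - 1/2))))
               / ((\<mu> / (2 * R1)) * (\<mu> / (R0 + R1)\<^sup>2))"
  have R1pos: "R1 > 0" unfolding R1_def by (simp add: add_nonneg_pos)
  have R0R1: "R0 + R1 > 0" using R1pos unfolding R0_def by linarith
  have Cpos: "C > 0" unfolding C_def using mu R1pos R0R1
    by (intro divide_pos_pos mult_pos_pos) auto
  have frdef: "(\<lambda>w. poly p w / poly q w) = fr" by (simp add: fr_def[abs_def])
  have main: "infdist x Jf \<le> C * r"
    if hz: "z \<in> E" and zx: "(T ^^ n) (Some x) = Some z" and rpos: "r > 0"
      and dr: "cmod (deriv (fr ^^ n) x) \<ge> 1 / r" for z n x r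
  proof (cases "infdist x Jf \<le> C * r")
    case True then show ?thesis .
  next
    case False
    define \<delta> where "\<delta> = infdist x Jf"
    have dpos: "\<delta> > 0" using False Cpos rpos unfolding \<delta>_def
      by (smt (verit) mult_pos_pos)
    have fin: "\<forall>j\<le>n. (T ^^ j) (Some x) \<noteq> None"
    proof (intro allI impI)
      fix j assume "j \<le> n"
      then have "n = (n - j) + j" by simp
      then have "(T ^^ n) (Some x) = (T ^^ (n - j)) ((T ^^ j) (Some x))"
        by (metis funpow_add o_apply)
      then have "(T ^^ (n - j)) ((T ^^ j) (Some x)) = Some z" using zx by simp
      then have "(T ^^ (n - j)) ((T ^^ j) (Some x)) \<in> Some ` E" using hz by (simp add: image_eqI)
      then show "(T ^^ j) (Some x) \<noteq> None" using assms(12) by blast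
    qed
    have omit: "(T ^^ n) (Some y) \<noteq> Some v" if "y \<in> ball x \<delta>" "v \<in> {c1, c2, c3}" for y v
    proof
      assume "(T ^^ n) (Some y) = Some v"
      then have "y \<in> Jf" using omitK[OF _ that(2)] unfolding Jf_def by blast
      then have "infdist x Jf \<le> dist x y" by (rule infdist_le)
      then show False using that(1) unfolding \<delta>_def by simp
    qed
    have zR: "cmod z \<le> R0" using R0 hz by blast
    have "\<delta> \<le> C * r"
    proof (cases "\<mu> / 2 \<le> cmod (z - c1)")
      case True
      show "\<delta> \<le> C * r" unfolding C_def
      proof (rule instance_bound[OF fin dpos _ _ _ _ zx zR R1(2) R1(3) R1(1) mu _ _ _ True rpos dr])
        show "\<And>y v. y \<in> ball x \<delta> \<Longrightarrow> v \<in> {c2, c3, c1} \<Longrightarrow> (T ^^ n) (Some y) \<noteq> Some v"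
          using omit by blast
      qed (use c12(1) c13 c23 mu_le in auto)
    next
      case False
      have "cmod (c1 - c2) \<le> cmod (z - c1) + cmod (z - c2)"
        using norm_triangle_ineq4[of "z - c2" "z - c1"] by (simp add: norm_minus_commute)
      then have dz2: "\<mu> / 2 \<le> cmod (z - c2)" using False mu_le(1) by linarith
      show "\<delta> \<le> C * r" unfolding C_def
      proof (rule instance_bound[OF fin dpos _ _ _ _ zx zR R1(1) R1(3) R1(2) mu _ _ _ dz2 rpos dr])
        show "\<And>y v. y \<in> ball x \<delta> \<Longrightarrow> v \<in> {c1, c3, c2} \<Longrightarrow> (T ^^ n) (Some y) \<noteq> Some v"
          using omit by blast
      qed (use c12(1) c13 c23 mu_le in auto)
    qed
    then show ?thesis unfolding \<delta>_def .
  qed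
  show ?thesis
  proof (intro exI[of _ C] conjI allI impI)
    show "C > 0" by (rule Cpos)
    fix z n x r
    assume h: "z \<in> E \<and> Some z \<notin> julia_set p q \<and> (rat_map p q ^^ n) (Some x) = Some z \<and> r > 0
            \<and> cmod (deriv ((\<lambda>w. poly p w / poly q w) ^^ n) x) \<ge> 1 / r"
    then have "cmod (deriv (fr ^^ n) x) \<ge> 1 / r" unfolding frdef by blast
    then have "infdist x Jf \<le> C * r" using main h by blast
    then show "infdist x {y. Some y \<in> julia_set p q} \<le> C * r" unfolding Jf_def .
  qed
qed

end
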